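(* Let $(A,f)$ be a finite-dimensional quadratic Lie algebra over a field $\mathbb{K}$ of characteristic zero, let $d$ be an $f$-skew-symmetric derivation of $A$, and let $(A_b,f_b)$ be the one-dimensional double extension of $(A,f)$ by $(b,d)$. Then $Z(A_b)=(Z(A)\cap\ker d)\oplus \mathbb{K}\beta$ if and only if $d$ is not an inner derivation of $A$. Otherwise $d=\mathrm{ad}\,x$ for some $x\in A$ and $Z(A_b)=(Z(A)\cap\ker d)\oplus\mathbb{K}\beta\oplus\mathbb{K}(b-x)$.
   Context: A quadratic Lie algebra $(A,f)$ is a Lie algebra with a non-degenerate symmetric bilinear form $f$ satisfying $f([x,y],z)+f(y,[x,z])=0$. A derivation $d$ is $f$-skew-symmetric if $f(d(x),y)+f(x,d(y))=0$ for all $x,y$. The one-dimensional double extension of $(A,f)$ by $(b,d)$ is the vector space $A_b=\mathbb{K}b\oplus A\oplus\mathbb{K}\beta$ with bracket $[\lambda b+a+\mu\beta,\lambda' b+a'+\mu'\beta]=\lambda d(a')-\lambda' d(a)+[a,a']_A+f(d(a),a')\beta$ ($\lambda,\lambda',\mu,\mu'\in\mathbb{K}$, $a,a'\in A$) and symmetric form $f_b(\lambda b+a+\mu\beta,\lambda' b+a'+\mu'\beta)=\lambda\mu'+\lambda'\mu+f(a,a')$. $Z(\cdot)$ denotes the centre. *)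

theory Defs
  imports Complex_Main "HOL-Library.Product_Plus"
begin

text \<open>A Lie algebra is the whole type 'v, a vector space over 'k via scalar multiplication s,
  with bracket br.\<close>

definition fin_dim :: "('k::field \<Rightarrow> 'v::ab_group_add \<Rightarrow> 'v) \<Rightarrow> bool" where
  "fin_dim s \<longleftrightarrow> (\<exists>B. finite B \<and> module.span s B = UNIV)"

definition lie_algebra :: "('k::field \<Rightarrow> 'v::ab_group_add \<Rightarrow> 'v) \<Rightarrow> ('v \<Rightarrow> 'v \<Rightarrow> 'v) \<Rightarrow> bool" where
  "lie_algebra s br \<longleftrightarrow> vector_space s
     \<and> (\<forall>x y z. br (x + y) z = br x z + br y z)
     \<and> (\<forall>x y z. br x (y + z) = br x y + br x z)
     \<and> (\<forall>c x y. br (s c x) y = s c (br x y))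
     \<and> (\<forall>c x y. br x (s c y) = s c (br x y))
     \<and> (\<forall>x. br x x = 0)
     \<and> (\<forall>x y z. br x (br y z) + br y (br z x) + br z (br x y) = 0)"

definition quadratic_lie_algebra ::
  "('k::field \<Rightarrow> 'v::ab_group_add \<Rightarrow> 'v) \<Rightarrow> ('v \<Rightarrow> 'v \<Rightarrow> 'v) \<Rightarrow> ('v \<Rightarrow> 'v \<Rightarrow> 'k) \<Rightarrow> bool" where
  "quadratic_lie_algebra s br f \<longleftrightarrow> lie_algebra s br
     \<and> (\<forall>x y z. f (x + y) z = f x z + f y z)
     \<and> (\<forall>c x y. f (s c x) y = c * f x y)
     \<and> (\<forall>x y. f x y = f y x)
     \<and> (\<forall>x. (\<forall>y. f x y = 0) \<longrightarrow> x = 0)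
     \<and> (\<forall>x y z. f (br x y) z + f y (br x z) = 0)"

definition derivation :: "('k::field \<Rightarrow> 'v::ab_group_add \<Rightarrow> 'v) \<Rightarrow> ('v \<Rightarrow> 'v \<Rightarrow> 'v) \<Rightarrow> ('v \<Rightarrow> 'v) \<Rightarrow> bool" where
  "derivation s br d \<longleftrightarrow> (\<forall>x y. d (x + y) = d x + d y) \<and> (\<forall>c x. d (s c x) = s c (d x))
     \<and> (\<forall>x y. d (br x y) = br (d x) y + br x (d y))"

definition skew_symmetric :: "('v \<Rightarrow> 'v \<Rightarrow> 'k::field) \<Rightarrow> ('v \<Rightarrow> 'v) \<Rightarrow> bool" where
  "skew_symmetric f d \<longleftrightarrow> (\<forall>x y. f (d x) y + f x (d y) = 0)"

definition ad :: "('v \<Rightarrow> 'v \<Rightarrow> 'v) \<Rightarrow> 'v \<Rightarrow> 'v \<Rightarrow> 'v" where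
  "ad br x = (\<lambda>y. br x y)"

definition inner_derivation :: "('v \<Rightarrow> 'v \<Rightarrow> 'v) \<Rightarrow> ('v \<Rightarrow> 'v) \<Rightarrow> bool" where
  "inner_derivation br d \<longleftrightarrow> (\<exists>x. d = ad br x)"

definition centre :: "('w \<Rightarrow> 'w \<Rightarrow> 'w::zero) \<Rightarrow> 'w set" where
  "centre br = {x. \<forall>y. br x y = 0}"

text \<open>Double extension A_b = K b + A + K beta, an element lambda b + a + mu beta
  represented as the triple (lambda, a, mu).\<close>

definition dext_br :: "('k::field \<Rightarrow> 'v::ab_group_add \<Rightarrow> 'v) \<Rightarrow> ('v \<Rightarrow> 'v \<Rightarrow> 'v) \<Rightarrow> ('v \<Rightarrow> 'v \<Rightarrow> 'k)
     \<Rightarrow> ('v \<Rightarrow> 'v) \<Rightarrow> 'k \<times> 'v \<times> 'k \<Rightarrow> 'k \<times> 'v \<times> 'k \<Rightarrow> 'k \<times> 'v \<times> 'k" where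
  "dext_br s br f d X Y = (case X of (l, a, m) \<Rightarrow> case Y of (l', a', m') \<Rightarrow>
      (0, s l (d a') - s l' (d a) + br a a', f (d a) a'))"

definition dext_form :: "('v \<Rightarrow> 'v \<Rightarrow> 'k::field) \<Rightarrow> 'k \<times> 'v \<times> 'k \<Rightarrow> 'k \<times> 'v \<times> 'k \<Rightarrow> 'k" where
  "dext_form f X Y = (case X of (l, a, m) \<Rightarrow> case Y of (l', a', m') \<Rightarrow> l * m' + l' * m + f a a')"

end

theory Submission
  imports Defs
begin

lemma centre_char:
  fixes s :: "'k::field \<Rightarrow> 'v::ab_group_add \<Rightarrow> 'v"
  assumes q: "quadratic_lie_algebra s br f" and dd: "derivation s br d"
  shows "(l, a, m) \<in> centre (dext_br s br f d) \<longleftrightarrow> d a = 0 \<and> (\<forall>a'. s l (d a') + br a a' = 0)"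
proof -
  have vs: "vector_space s" using q unfolding quadratic_lie_algebra_def lie_algebra_def by blast
  interpret vs: vector_space s by (rule vs)
  have fadd: "\<And>x y z. f (x + y) z = f x z + f y z" using q unfolding quadratic_lie_algebra_def by blast
  have fs: "\<And>c x y. f (s c x) y = c * f x y" using q unfolding quadratic_lie_algebra_def by blast
  have f0: "\<And>y. f 0 y = 0" using fs[of 0 0] by simp
  have nd: "\<And>x. (\<forall>y. f x y = 0) \<Longrightarrow> x = 0" using q unfolding quadratic_lie_algebra_def by blast
  show ?thesis
  proof
    assume c: "(l, a, m) \<in> centre (dext_br s br f d)"
    have e: "\<And>a'. dext_br s br f d (l, a, m) (0, a', 0) = 0" using c unfolding centre_def by blast
    have "\<And>a'. f (d a) a' = 0" using e unfolding dext_br_def by (simp add: zero_prod_def)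
    hence da: "d a = 0" using nd by blast
    have "\<And>a'. s l (d a') + br a a' = 0" using e unfolding dext_br_def by (simp add: zero_prod_def)
    with da show "d a = 0 \<and> (\<forall>a'. s l (d a') + br a a' = 0)" by blast
  next
    assume h: "d a = 0 \<and> (\<forall>a'. s l (d a') + br a a' = 0)"
    show "(l, a, m) \<in> centre (dext_br s br f d)"
      unfolding centre_def
    proof (safe)
      fix y :: "'k \<times> 'v \<times> 'k"
      obtain l' a' m' where y: "y = (l', a', m')" by (cases y) auto
      have "s l (d a') - s l' (d a) + br a a' = 0" using h by (simp add: algebra_simps)
      then show "dext_br s br f d (l, a, m) y = 0"
        unfolding y dext_br_def using h f0 by (simp add: zero_prod_def)
    qed
  qed
qed

theorem lemma2p8:
  fixes s :: "'k::field_char_0 \<Rightarrow> 'v::ab_group_add \<Rightarrow> 'v"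
    and br :: "'v \<Rightarrow> 'v \<Rightarrow> 'v" and f :: "'v \<Rightarrow> 'v \<Rightarrow> 'k" and d :: "'v \<Rightarrow> 'v"
  assumes "quadratic_lie_algebra s br f" and "fin_dim s"
    and "derivation s br d" and "skew_symmetric f d"
  shows "(centre (dext_br s br f d) = {(0, a, m) | a m. a \<in> centre br \<inter> {a. d a = 0}}
           \<longleftrightarrow> \<not> inner_derivation br d)
         \<and> (inner_derivation br d \<longrightarrow> (\<exists>x. d = ad br x \<and>
           centre (dext_br s br f d) = {(l, a - s l x, m) | l a m. a \<in> centre br \<inter> {a. d a = 0}}))"
proof -
  note q = assms(1) and dd = assms(3)
  have vs: "vector_space s" using q unfolding quadratic_lie_algebra_def lie_algebra_def by blast
  interpret vs: vector_space s by (rule vs)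
  have lie: "lie_algebra s br" using q unfolding quadratic_lie_algebra_def by blast
  have bladd: "\<And>x y z. br (x + y) z = br x z + br y z" using lie unfolding lie_algebra_def by simp
  have brs: "\<And>c x y. br (s c x) y = s c (br x y)" using lie unfolding lie_algebra_def by simp
  have brradd: "\<And>x y z. br x (y + z) = br x y + br x z" using lie unfolding lie_algebra_def by simp
  have brrs: "\<And>c x y. br x (s c y) = s c (br x y)" using lie unfolding lie_algebra_def by simp
  have brr0: "\<And>x. br x 0 = 0" using brradd[of _ 0 0] by simp
  have brrminus: "\<And>x z. br x (- z) = - br x z" using brradd[of x z "-z" for x z] brr0 by (simp add: eq_neg_iff_add_eq_0 add.commute)
  have brrdiff: "\<And>x y z. br x (y - z) = br x y - br x z" using brradd brrminus by (metis diff_conv_add_uminus)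
  have brr: "\<And>x. br x x = 0" using lie unfolding lie_algebra_def by simp
  have dadd: "\<And>x y. d (x + y) = d x + d y" using dd unfolding derivation_def by blast
  have ds: "\<And>c x. d (s c x) = s c (d x)" using dd unfolding derivation_def by blast
  have bl0: "\<And>z. br 0 z = 0" using bladd[of 0 0] by simp
  have blminus: "\<And>x z. br (- x) z = - br x z" using bladd[of x "-x" z for x z] bl0 by (simp add: eq_neg_iff_add_eq_0 add.commute)
  have bldiff: "\<And>x y z. br (x - y) z = br x z - br y z" using bladd blminus by (metis diff_conv_add_uminus)
  have d0: "d 0 = 0" using dadd[of 0 0] by simp
  have dminus: "\<And>x. d (- x) = - d x" using dadd[of x "-x" for x] d0 by (simp add: eq_neg_iff_add_eq_0 add.commute)
  have ddiff: "\<And>x y. d (x - y) = d x - d y" using dadd dminus by (metis diff_conv_add_uminus)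
  note cc = centre_char[OF q dd]
  have l0: "l = 0" if "(l, a, m) \<in> centre (dext_br s br f d)" "\<not> inner_derivation br d" for l a m
  proof (rule ccontr)
    assume ln: "l \<noteq> 0"
    from cc that(1) have h: "\<And>a'. s l (d a') + br a a' = 0" by blast
    have "d = ad br (s (- inverse l) a)"
    proof
      fix a'
      have "s l (d a') = - br a a'" using h by (simp add: eq_neg_iff_add_eq_0)
      hence "s (inverse l) (s l (d a')) = s (inverse l) (- br a a')" by simp
      hence "d a' = - s (inverse l) (br a a')" using ln by simp
      thus "d a' = ad br (s (- inverse l) a) a'" unfolding ad_def by (simp add: brs blminus)
    qed
    thus False using that(2) unfolding inner_derivation_def by blast
  qed
  have part_ni: "centre (dext_br s br f d) = {(0, a, m) | a m. a \<in> centre br \<inter> {a. d a = 0}}"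
    if ni: "\<not> inner_derivation br d"
  proof safe
    fix l a m assume c: "(l, a, m) \<in> centre (dext_br s br f d)"
    have "l = 0" using l0 c ni by blast
    with c cc show "\<exists>a' m'. (l, a, m) = (0, a', m') \<and> a' \<in> centre br \<inter> {a. d a = 0}"
      unfolding centre_def[of br] by auto
  next
    fix a m assume "a \<in> centre br" "d a = 0"
    then show "(0, a, m) \<in> centre (dext_br s br f d)" using cc unfolding centre_def[of br] by auto
  qed
  have part_i: "\<exists>x. d = ad br x \<and>
           centre (dext_br s br f d) = {(l, a - s l x, m) | l a m. a \<in> centre br \<inter> {a. d a = 0}}"
    if i: "inner_derivation br d"
  proof -
    obtain x where x: "d = ad br x" using i unfolding inner_derivation_def by blast
    have dx: "\<And>y. d y = br x y" using x unfolding ad_def by simp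
    have "centre (dext_br s br f d) = {(l, a - s l x, m) | l a m. a \<in> centre br \<inter> {a. d a = 0}}"
    proof safe
      fix l c m assume "(l, c, m) \<in> centre (dext_br s br f d)"
      hence h: "d c = 0" "\<And>a'. s l (d a') + br c a' = 0" using cc by blast+
      have "\<And>a'. br (c + s l x) a' = 0" using h(2) by (simp add: bladd brs dx add.commute)
      hence "c + s l x \<in> centre br" unfolding centre_def by blast
      moreover have "d (c + s l x) = 0" using h(1) by (simp add: dadd ds dx brr brradd brrs)
      ultimately show "\<exists>l' a m'. (l, c, m) = (l', a - s l' x, m') \<and> a \<in> centre br \<inter> {a. d a = 0}"
        by (intro exI[of _ l] exI[of _ "c + s l x"] exI[of _ m]) auto
    next
      fix l a m assume a: "a \<in> centre br" "d a = 0"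
      have ba: "\<And>y. br a y = 0" using a(1) unfolding centre_def by blast
      have "d (a - s l x) = 0" using a(2) by (simp add: ddiff ds dx brr brrdiff brrs)
      moreover have "\<forall>a'. s l (d a') + br (a - s l x) a' = 0"
        by (simp add: bldiff brs ba dx)
      ultimately show "(l, a - s l x, m) \<in> centre (dext_br s br f d)" using cc by blast
    qed
    with x show ?thesis by blast
  qed
  have part_ne: "centre (dext_br s br f d) \<noteq> {(0, a, m) | a m. a \<in> centre br \<inter> {a. d a = 0}}"
    if i: "inner_derivation br d"
  proof
    assume e: "centre (dext_br s br f d) = {(0, a, m) | a m. a \<in> centre br \<inter> {a. d a = 0}}"
    obtain x where x: "d = ad br x" using i unfolding inner_derivation_def by blast
    have dx: "\<And>y. d y = br x y" using x unfolding ad_def by simp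
    have "(1, - x, 0) \<in> centre (dext_br s br f d)"
      using cc by (simp add: dminus dx brr blminus brrminus)
    with e show False by auto
  qed
  show ?thesis using part_ni part_i part_ne by blast
qed

end
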